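(* Let $\mathcal{A}$ be a finite alphabet and $k\ge 2$. Any strongly $k$-product-free subset $S$ of the free semigroup over $\mathcal{A}$ has upper asymptotic density at most $1/k$.
   Context: A subset $S$ of a semigroup is $\ell$-product-free ($\ell\ge2$) if there are no $x_1,\dots,x_\ell,y\in S$ (not necessarily distinct) with $x_1\cdots x_\ell=y$; it is strongly $k$-product-free if it is $\ell$-product-free for every $2\le\ell\le k$. The free semigroup over $\mathcal{A}$ consists of nonempty finite words over $\mathcal{A}$ with concatenation. It carries the measure $\mu$ assigning weight $|\mathcal{A}|^{-n}$ to every word of length $n$ (so each length layer has total weight one), and the upper asymptotic density of a set $A$ is $\limsup_{n\to\infty}\mu(A_{\le n})/\mu(\text{all words of length}\le n)$, where $A_{\le n}$ is the set of words of $A$ of length at most $n$. *)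

theory Defs
  imports "HOL-Analysis.Analysis"
begin

definition free_semigroup :: "'a list set" where
  "free_semigroup = {w. w \<noteq> []}"

definition product_free :: "nat \<Rightarrow> 'a list set \<Rightarrow> bool" where
  "product_free l S \<longleftrightarrow>
     \<not> (\<exists>xs y. length xs = l \<and> set xs \<subseteq> S \<and> y \<in> S \<and> concat xs = y)"

definition strongly_product_free :: "nat \<Rightarrow> 'a list set \<Rightarrow> bool" where
  "strongly_product_free k S \<longleftrightarrow> (\<forall>l. 2 \<le> l \<and> l \<le> k \<longrightarrow> product_free l S)"

definition mu_upto :: "'a::finite list set \<Rightarrow> nat \<Rightarrow> real" where
  "mu_upto A n = (\<Sum>w\<in>{w \<in> A \<inter> (free_semigroup :: 'a list set). length w \<le> n}.
                    (1 / real CARD('a)) ^ length w)"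

definition upper_density :: "'a::finite list set \<Rightarrow> ereal" where
  "upper_density A = limsup (\<lambda>n. ereal (mu_upto A n / mu_upto (free_semigroup :: 'a list set) n))"

end

theory Submission
  imports Defs "HOL-Library.Diagonal_Subsequence" "HOL-Library.Countable"
begin

definition cnt :: "'a list set \<Rightarrow> nat \<Rightarrow> 'a list \<Rightarrow> nat" where
  "cnt S m x = card {v. length v = m \<and> x @ v \<in> S}"

definition aa :: "'a::finite list set \<Rightarrow> nat \<Rightarrow> 'a list \<Rightarrow> real" where
  "aa S m x = real (cnt S m x) / real CARD('a) ^ m"

definition CC :: "'a::finite list set \<Rightarrow> nat \<Rightarrow> 'a list \<Rightarrow> real" where
  "CC S n x = (\<Sum>m<n. aa S (Suc m) x) / real n"

lemma words_finite: "finite {v::'a::finite list. length v = m}"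
  using finite_lists_length_eq[of "UNIV::'a set" m] by simp

lemma words_card: "card {v::'a::finite list. length v = m} = CARD('a) ^ m"
  using card_lists_length_eq[of "UNIV::'a set" m] by simp

lemma cnt_le: "cnt S m (x::'a::finite list) \<le> CARD('a) ^ m"
  unfolding cnt_def using card_mono[OF words_finite[of m]] words_card[of m]
  by (metis (mono_tags, lifting) mem_Collect_eq subsetI)

lemma q_pos: "real CARD('a::finite) > 0" by simp

lemma aa_nonneg: "aa S m x \<ge> 0" unfolding aa_def by simp

lemma aa_le1: "aa S m (x::'a::finite list) \<le> 1"
proof -
  have "real (cnt S m x) \<le> real CARD('a) ^ m" using cnt_le[of S m x]
    by (metis of_nat_le_iff of_nat_power)
  then show ?thesis unfolding aa_def by (simp add: divide_le_eq_1)
qed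

lemma cnt_Suc: "cnt S (Suc m) (x::'a::finite list) = (\<Sum>b\<in>UNIV. cnt S m (x @ [b]))"
proof -
  have eq: "{v. length v = Suc m \<and> x @ v \<in> S} =
      (\<Union>b\<in>UNIV. (\<lambda>v. b # v) ` {v. length v = m \<and> (x @ [b]) @ v \<in> S})"
    by (auto simp: length_Suc_conv)
  have fin: "\<And>b. finite ((\<lambda>v. b # v) ` {v. length v = m \<and> (x @ [b]) @ v \<in> S})"
    using words_finite[of m] by (auto intro: finite_subset)
  have disj: "\<forall>b\<in>UNIV. \<forall>b'\<in>UNIV. b \<noteq> b' \<longrightarrow>
      (\<lambda>v. b # v) ` {v. length v = m \<and> (x @ [b]) @ v \<in> S} \<inter>
      (\<lambda>v. b' # v) ` {v. length v = m \<and> (x @ [b']) @ v \<in> S} = {}" by auto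
  have "cnt S (Suc m) x = (\<Sum>b\<in>UNIV. card ((\<lambda>v. b # v) ` {v. length v = m \<and> (x @ [b]) @ v \<in> S}))"
    unfolding cnt_def eq by (rule card_UN_disjoint) (use fin disj in auto)
  also have "\<dots> = (\<Sum>b\<in>UNIV. cnt S m (x @ [b]))"
    unfolding cnt_def by (intro sum.cong refl card_image) (auto simp: inj_on_def)
  finally show ?thesis .
qed

lemma aa_Suc: "aa S (Suc m) (x::'a::finite list) = (\<Sum>b\<in>UNIV. aa S m (x @ [b])) / real CARD('a)"
  unfolding aa_def cnt_Suc by (simp add: sum_divide_distrib[symmetric] field_simps)

lemma CC_harm: "\<bar>CC S n (x::'a::finite list) - (\<Sum>b\<in>UNIV. CC S n (x @ [b])) / real CARD('a)\<bar> \<le> 1 / real n"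
proof (cases "n = 0")
  case True then show ?thesis by (simp add: CC_def)
next
  case False
  let ?q = "real CARD('a)"
  have shift: "(\<Sum>m<n. aa S m y) = aa S 0 y + (\<Sum>m<n. aa S (Suc m) y) - aa S n y" for y
    by (induct n) auto
  have "(\<Sum>m<n. aa S (Suc m) x) = (\<Sum>m<n. (\<Sum>b\<in>UNIV. aa S m (x @ [b])) / ?q)"
    by (simp add: aa_Suc)
  also have "\<dots> = (\<Sum>m<n. (\<Sum>b\<in>UNIV. aa S m (x @ [b]))) / ?q"
    by (rule sum_divide_distrib[symmetric])
  also have "(\<Sum>m<n. (\<Sum>b\<in>UNIV. aa S m (x @ [b]))) = (\<Sum>b\<in>UNIV. (\<Sum>m<n. aa S m (x @ [b])))"
    by (rule sum.swap)
  also have "\<dots> = (\<Sum>b\<in>UNIV. (\<Sum>m<n. aa S (Suc m) (x @ [b])) + (aa S 0 (x @ [b]) - aa S n (x @ [b])))"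
    by (intro sum.cong refl) (simp add: shift)
  also have "\<dots> = (\<Sum>b\<in>UNIV. (\<Sum>m<n. aa S (Suc m) (x @ [b]))) + (\<Sum>b\<in>UNIV. (aa S 0 (x @ [b]) - aa S n (x @ [b])))"
    by (rule sum.distrib)
  finally have E: "(\<Sum>m<n. aa S (Suc m) x) = ((\<Sum>b\<in>UNIV. (\<Sum>m<n. aa S (Suc m) (x @ [b]))) + (\<Sum>b\<in>UNIV. (aa S 0 (x @ [b]) - aa S n (x @ [b])))) / ?q" .
  have bnd: "\<bar>(\<Sum>b\<in>UNIV. (aa S 0 (x @ [b]) - aa S n (x @ [b])))\<bar> \<le> ?q"
  proof -
    have "\<bar>(\<Sum>b\<in>UNIV. (aa S 0 (x @ [b]) - aa S n (x @ [b])))\<bar> \<le> (\<Sum>b\<in>(UNIV::'a set). \<bar>aa S 0 (x @ [b]) - aa S n (x @ [b])\<bar>)"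
      by (rule sum_abs)
    also have "\<dots> \<le> (\<Sum>b\<in>(UNIV::'a set). 1)"
    proof (intro sum_mono)
      fix b
      show "\<bar>aa S 0 (x @ [b]) - aa S n (x @ [b])\<bar> \<le> 1"
        using aa_nonneg[of S 0 "x@[b]"] aa_le1[of S 0 "x@[b]"] aa_nonneg[of S n "x@[b]"] aa_le1[of S n "x@[b]"]
        by (simp add: abs_le_iff)
    qed
    finally show ?thesis by simp
  qed
  have CCb: "(\<Sum>b\<in>UNIV. CC S n (x @ [b])) = (\<Sum>b\<in>UNIV. (\<Sum>m<n. aa S (Suc m) (x @ [b]))) / real n"
    unfolding CC_def by (rule sum_divide_distrib[symmetric])
  have "CC S n x - (\<Sum>b\<in>UNIV. CC S n (x @ [b])) / ?q = ((\<Sum>b\<in>UNIV. (aa S 0 (x @ [b]) - aa S n (x @ [b]))) / ?q) / real n"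
  proof -
    define B where "B = (\<Sum>b\<in>UNIV. (\<Sum>m<n. aa S (Suc m) (x @ [b])))"
    define R where "R = (\<Sum>b\<in>UNIV. (aa S 0 (x @ [b]) - aa S n (x @ [b])))"
    have e1: "CC S n x = ((B + R) / ?q) / real n" unfolding CC_def E B_def R_def ..
    have e2: "(\<Sum>b\<in>UNIV. CC S n (x @ [b])) / ?q = (B / ?q) / real n"
      unfolding CCb B_def by (simp add: field_simps)
    have e3: "((B + R) / ?q) / real n - (B / ?q) / real n = ((B + R) / ?q - B / ?q) / real n"
      by (rule diff_divide_distrib[symmetric])
    have e4: "(B + R) / ?q - B / ?q = R / ?q"
      by (metis add_diff_cancel_left' diff_divide_distrib)
    show ?thesis unfolding e1 e2 e3 e4 by (simp only: R_def)
  qed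
  also have "\<bar>\<dots>\<bar> \<le> 1 / real n"
  proof -
    define R where "R = (\<Sum>b\<in>UNIV. (aa S 0 (x @ [b]) - aa S n (x @ [b])))"
    have qp: "?q > 0" by simp
    have a1: "\<bar>R / ?q\<bar> = \<bar>R\<bar> / ?q" using qp by (simp add: abs_divide)
    have a2: "\<bar>R\<bar> / ?q \<le> 1" using bnd qp unfolding R_def by (simp add: divide_le_eq_1_pos)
    have a3: "\<bar>(R / ?q) / real n\<bar> = \<bar>R / ?q\<bar> / real n" by (simp add: abs_divide)
    have "\<bar>R / ?q\<bar> \<le> 1" using a1 a2 by linarith
    then have "\<bar>R / ?q\<bar> / real n \<le> 1 / real n" by (rule divide_right_mono) simp
    then show ?thesis unfolding R_def[symmetric] a3 .
  qed
  finally show ?thesis .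
qed


locale dlim =
  fixes S :: "'a::finite list set" and D :: "'a list \<Rightarrow> real" and k :: nat
  assumes D_nonneg: "\<And>x. 0 \<le> D x" and D_le1: "\<And>x. D x \<le> 1"
  and D_harm: "\<And>x. D x = (\<Sum>b\<in>UNIV. D (x @ [b])) / real CARD('a)"
  and D_pos: "\<And>x \<eta>. \<eta> > 0 \<Longrightarrow> \<exists>m. real (cnt S m x) / real CARD('a) ^ m > D x - \<eta>"
  and D_chain: "\<And>cs z. length cs = k - 1 \<Longrightarrow> set cs \<subseteq> S \<Longrightarrow> (\<Sum>j\<le>k-1. D (concat (drop j cs) @ z)) \<le> 1"
  and k2: "k \<ge> 2"
begin

definition M where "M = Sup (range D)"

lemma bdd: "bdd_above (range D)" by (rule bdd_aboveI[where M=1]) (use D_le1 in auto)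

lemma D_le_M: "D x \<le> M" unfolding M_def by (rule cSup_upper[OF _ bdd]) auto

lemma M_approx: assumes "e > 0" shows "\<exists>z. M - D z < e"
proof -
  have "M - e < Sup (range D)" using assms unfolding M_def by simp
  then obtain y where "y \<in> range D" "M - e < y" using less_cSup_iff[OF _ bdd] by blast
  then obtain z where "M - e < D z" by auto
  then show ?thesis by (intro exI[of _ z]) linarith
qed

lemma H1_step: "M - D (x @ [b]) \<le> real CARD('a) * (M - D x)"
proof -
  let ?q = "real CARD('a)"
  have "real CARD('a) * D x = (\<Sum>b\<in>UNIV. D (x @ [b]))" using D_harm[of x] by simp
  also have "\<dots> = D (x @ [b]) + (\<Sum>b'\<in>UNIV - {b}. D (x @ [b']))"
    by (rule sum.remove) auto
  also have "(\<Sum>b'\<in>UNIV - {b}. D (x @ [b'])) \<le> real (card (UNIV - {b} :: 'a set)) * M"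
    using sum_bounded_above[of "UNIV - {b}" "\<lambda>b'. D (x @ [b'])" M] D_le_M by auto
  also have "real (card (UNIV - {b} :: 'a set)) = ?q - 1"
  proof -
    have "card (UNIV - {b} :: 'a set) = CARD('a) - 1" by (simp add: card_Diff_singleton)
    moreover have "CARD('a) \<ge> 1" by (simp add: Suc_leI)
    ultimately show ?thesis by simp
  qed
  finally have "?q * D x \<le> D (x @ [b]) + (?q - 1) * M" by simp
  then show ?thesis by (simp add: algebra_simps)
qed

lemma H1: "M - D (x @ w) \<le> real CARD('a) ^ length w * (M - D x)"
proof (induct w arbitrary: x)
  case Nil then show ?case by simp
next
  case (Cons b w)
  have "M - D (x @ b # w) = M - D ((x @ [b]) @ w)" by simp
  also have "\<dots> \<le> real CARD('a) ^ length w * (M - D (x @ [b]))" by (rule Cons)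
  also have "\<dots> \<le> real CARD('a) ^ length w * (real CARD('a) * (M - D x))"
    by (rule mult_left_mono[OF H1_step]) simp
  finally show ?case by (simp add: algebra_simps)
qed

lemma H2: "(\<Sum>v\<in>{v::'a list. length v = m}. D (x @ v)) = real CARD('a) ^ m * D x"
proof (induct m arbitrary: x)
  case 0
  have "{v::'a list. length v = 0} = {[]}" by auto
  then show ?case by simp
next
  case (Suc m)
  have eq: "{v::'a list. length v = Suc m} = (\<lambda>(xs, n). n#xs) ` ({v. length v = m} \<times> UNIV)"
    using lists_length_Suc_eq[of "UNIV::'a set" m] by simp
  have inj: "inj_on (\<lambda>(xs, n). n#xs) ({v::'a list. length v = m} \<times> (UNIV::'a set))"
    by (auto simp: inj_on_def)
  have "(\<Sum>v\<in>{v::'a list. length v = Suc m}. D (x @ v)) =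
        (\<Sum>p\<in>{v::'a list. length v = m} \<times> (UNIV::'a set). D (x @ (snd p # fst p)))"
    unfolding eq by (subst sum.reindex[OF inj]) (auto intro!: sum.cong simp: case_prod_beta)
  also have "\<dots> = (\<Sum>(v,b)\<in>{v::'a list. length v = m} \<times> (UNIV::'a set). D ((x @ [b]) @ v))"
    by (intro sum.cong) (auto simp: case_prod_beta)
  also have "\<dots> = (\<Sum>v\<in>{v::'a list. length v = m}. \<Sum>b\<in>UNIV. D ((x @ [b]) @ v))"
    by (rule sum.cartesian_product[symmetric])
  also have "\<dots> = (\<Sum>b\<in>UNIV. \<Sum>v\<in>{v::'a list. length v = m}. D ((x @ [b]) @ v))"
    by (rule sum.swap)
  also have "\<dots> = (\<Sum>b\<in>UNIV. real CARD('a) ^ m * D (x @ [b]))"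
    by (intro sum.cong refl) (rule Suc)
  also have "\<dots> = real CARD('a) ^ m * (\<Sum>b\<in>UNIV. D (x @ [b]))"
    by (simp add: sum_distrib_left)
  also have "(\<Sum>b\<in>UNIV. D (x @ [b])) = real CARD('a) * D x"
    using D_harm[of x] by simp
  finally show ?case by simp
qed

lemma markov:
  assumes "\<tau> > 0"
  shows "real (card {v::'a list. length v = m \<and> D (x @ v) < M - \<tau>}) * \<tau> \<le> real CARD('a) ^ m * (M - D x)"
proof -
  let ?W = "{v::'a list. length v = m}"
  let ?B = "{v::'a list. length v = m \<and> D (x @ v) < M - \<tau>}"
  have finB: "finite ?B" by (rule finite_subset[OF _ words_finite[of m]]) auto
  have "real (card ?B) * \<tau> = (\<Sum>v\<in>?B. \<tau>)" by simp
  also have "\<dots> \<le> (\<Sum>v\<in>?B. M - D (x @ v))" by (rule sum_mono) auto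
  also have "\<dots> \<le> (\<Sum>v\<in>?W. M - D (x @ v))"
    by (rule sum_mono2[OF words_finite]) (auto simp: D_le_M)
  also have "\<dots> = real (card ?W) * M - (\<Sum>v\<in>?W. D (x @ v))"
    by (simp add: sum_subtractf)
  also have "\<dots> = real CARD('a) ^ m * (M - D x)"
    unfolding H2 words_card by (simp add: algebra_simps)
  finally show ?thesis .
qed

lemma Snear:
  assumes Mpos: "M > 0" and tpos: "\<tau> > 0"
  shows "\<exists>c\<in>S. M - D c \<le> \<tau>"
proof -
  define \<eta> where "\<eta> = M / (3 + 1 / \<tau>)"
  have den: "3 + 1 / \<tau> > 0" using tpos by (simp add: add_pos_pos)
  have epos: "\<eta> > 0" unfolding \<eta>_def using Mpos den by simp
  have key: "2 * \<eta> + \<eta> / \<tau> < M"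
  proof -
    have "\<eta> * (3 + 1 / \<tau>) = M" unfolding \<eta>_def using den by simp
    then have "2 * \<eta> + \<eta> / \<tau> = M - \<eta>" by (simp add: algebra_simps)
    then show ?thesis using epos by simp
  qed
  obtain x where x: "M - D x < \<eta>" using M_approx[OF epos] by blast
  obtain m where m: "real (cnt S m x) / real CARD('a) ^ m > D x - \<eta>" using D_pos[OF epos] by blast
  let ?Q = "real CARD('a) ^ m"
  have Qpos: "?Q > 0" by simp
  let ?G = "{v::'a list. length v = m \<and> x @ v \<in> S}"
  let ?B = "{v::'a list. length v = m \<and> D (x @ v) < M - \<tau>}"
  have "real (card ?B) * \<tau> \<le> ?Q * (M - D x)" by (rule markov[OF tpos])
  also have "\<dots> < ?Q * \<eta>" using x Qpos by simp
  finally have B1: "real (card ?B) < ?Q * \<eta> / \<tau>" using tpos by (simp add: pos_less_divide_eq)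
  have G1: "real (card ?G) > ?Q * (M - 2 * \<eta>)"
  proof -
    have "real (cnt S m x) > ?Q * (D x - \<eta>)" using m Qpos by (simp add: pos_less_divide_eq mult.commute)
    moreover have "?Q * (D x - \<eta>) > ?Q * (M - 2 * \<eta>)" using x Qpos by simp
    ultimately show ?thesis unfolding cnt_def by linarith
  qed
  have "?Q * \<eta> / \<tau> \<le> ?Q * (M - 2 * \<eta>)"
  proof -
    have "\<eta> / \<tau> \<le> M - 2 * \<eta>" using key by simp
    then have "?Q * (\<eta> / \<tau>) \<le> ?Q * (M - 2 * \<eta>)" using Qpos by (intro mult_left_mono) auto
    then show ?thesis by (simp only: times_divide_eq_right)
  qed
  with B1 G1 have "card ?B < card ?G" by linarith
  then have "\<not> ?G \<subseteq> ?B"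
    using card_mono[OF finite_subset[OF _ words_finite[of m]]] by (metis (no_types, lifting) leD mem_Collect_eq subsetI)
  then obtain v where v: "length v = m" "x @ v \<in> S" "\<not> D (x @ v) < M - \<tau>" by blast
  then show ?thesis by (intro bexI[of _ "x @ v"]) auto
qed

end


context dlim
begin

lemma chainQ:
  assumes Mpos: "M > 0" and epos: "\<epsilon> > 0"
  shows "M - D z \<le> \<epsilon> / 2 \<Longrightarrow> \<exists>cs. length cs = t \<and> set cs \<subseteq> S \<and> (\<forall>j\<le>t. M - D (concat (drop j cs) @ z) \<le> \<epsilon>)"
proof (induct t arbitrary: z)
  case 0
  then show ?case using epos by (intro exI[of _ "[]"]) auto
next
  case (Suc t)
  let ?q = "real CARD('a)"
  define \<tau> where "\<tau> = (\<epsilon> / 2) / ?q ^ length z"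
  have qz: "?q ^ length z > 0" by simp
  have tpos: "\<tau> > 0" unfolding \<tau>_def using epos qz by simp
  obtain c where c: "c \<in> S" "M - D c \<le> \<tau>" using Snear[OF Mpos tpos] by blast
  have "M - D (c @ z) \<le> ?q ^ length z * (M - D c)" by (rule H1)
  also have "\<dots> \<le> ?q ^ length z * \<tau>" using c(2) qz by (intro mult_left_mono) auto
  also have "\<dots> = \<epsilon> / 2" unfolding \<tau>_def using qz by simp
  finally have cz: "M - D (c @ z) \<le> \<epsilon> / 2" .
  obtain cs where cs: "length cs = t" "set cs \<subseteq> S" "\<forall>j\<le>t. M - D (concat (drop j cs) @ (c @ z)) \<le> \<epsilon>"
    using Suc(1)[OF cz] by blast
  show ?case
  proof (intro exI[of _ "cs @ [c]"] conjI allI impI)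
    show "length (cs @ [c]) = Suc t" using cs by simp
    show "set (cs @ [c]) \<subseteq> S" using cs c by simp
    fix j assume j: "j \<le> Suc t"
    show "M - D (concat (drop j (cs @ [c])) @ z) \<le> \<epsilon>"
    proof (cases "j \<le> t")
      case True
      then have "drop j (cs @ [c]) = drop j cs @ [c]" using cs(1) by simp
      then have "concat (drop j (cs @ [c])) @ z = concat (drop j cs) @ (c @ z)" by simp
      then show ?thesis using cs(3) True by simp
    next
      case False
      then have "j = Suc t" using j by simp
      then have "drop j (cs @ [c]) = []" using cs(1) by simp
      then show ?thesis using Suc(2) epos by simp
    qed
  qed
qed

lemma M_le: "M \<le> 1 / real k"
proof (rule field_le_epsilon)
  fix e :: real assume epos: "0 < e"
  have kpos: "real k > 0" using k2 by simp
  show "M \<le> 1 / real k + e"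
  proof (cases "M > 0")
    case False
    have "1 / real k > 0" using kpos by simp
    then show ?thesis using False epos by linarith
  next
    case True
    have e2: "e / 2 > 0" using epos by simp
    obtain z where z: "M - D z < e / 2" using M_approx[OF e2] by blast
    obtain cs where cs: "length cs = k - 1" "set cs \<subseteq> S"
        "\<forall>j\<le>k - 1. M - D (concat (drop j cs) @ z) \<le> e"
      using chainQ[OF True epos, of z "k - 1"] z by auto
    have "real (card {..k-1}) * (M - e) \<le> (\<Sum>j\<le>k-1. D (concat (drop j cs) @ z))"
      by (rule sum_bounded_below) (use cs(3) in auto)
    also have "\<dots> \<le> 1" by (rule D_chain[OF cs(1) cs(2)])
    finally have "real (card {..k-1}) * (M - e) \<le> 1" .
    moreover have "card {..k-1} = k" using k2 by simp
    ultimately have "real k * (M - e) \<le> 1" by simp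
    then have "M - e \<le> 1 / real k" using kpos by (simp add: pos_le_divide_eq mult.commute)
    then show ?thesis by simp
  qed
qed

lemma D_nil_le: "D [] \<le> 1 / real k"
  using D_le_M M_le by (rule order_trans)

end


lemma CC_nonneg: "CC S n x \<ge> 0"
  unfolding CC_def by (intro divide_nonneg_nonneg sum_nonneg) (auto simp: aa_nonneg)

lemma CC_le1: "CC S n (x::'a::finite list) \<le> 1"
proof (cases "n = 0")
  case True then show ?thesis by (simp add: CC_def)
next
  case False
  have "(\<Sum>m<n. aa S (Suc m) x) \<le> (\<Sum>m<n. (1::real))" by (intro sum_mono aa_le1)
  then have "(\<Sum>m<n. aa S (Suc m) x) \<le> real n" by simp
  then show ?thesis unfolding CC_def using False by (simp add: divide_le_eq_1)
qed

lemma mu_formula: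
  fixes T :: "'a::finite list set"
  assumes "T \<subseteq> free_semigroup"
  shows "mu_upto T n = (\<Sum>m<n. aa T (Suc m) [])"
proof (induct n)
  case 0
  have "{w \<in> T \<inter> (free_semigroup :: 'a list set). length w \<le> 0} = {}"
    by (auto simp: free_semigroup_def)
  then show ?case unfolding mu_upto_def by simp
next
  case (Suc n)
  let ?A = "{w \<in> T \<inter> (free_semigroup :: 'a list set). length w \<le> n}"
  let ?B = "{w \<in> T. length w = Suc n}"
  have eq: "{w \<in> T \<inter> (free_semigroup :: 'a list set). length w \<le> Suc n} = ?A \<union> ?B"
    using assms by (auto simp: free_semigroup_def)
  have finA: "finite ?A"
    by (rule finite_subset[OF _ finite_lists_length_le[of "UNIV::'a set" n]]) auto
  have finB: "finite ?B" by (rule finite_subset[OF _ words_finite[of "Suc n"]]) auto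
  have disj: "?A \<inter> ?B = {}" by auto
  have "mu_upto T (Suc n) = (\<Sum>w\<in>?A. (1 / real CARD('a)) ^ length w) + (\<Sum>w\<in>?B. (1 / real CARD('a)) ^ length w)"
    unfolding mu_upto_def eq by (rule sum.union_disjoint[OF finA finB disj])
  also have "(\<Sum>w\<in>?A. (1 / real CARD('a)) ^ length w) = mu_upto T n" unfolding mu_upto_def ..
  also have "(\<Sum>w\<in>?B. (1 / real CARD('a)) ^ length w) = (\<Sum>w\<in>?B. (1 / real CARD('a)) ^ Suc n)"
    by (rule sum.cong) auto
  also have "\<dots> = real (card ?B) / real CARD('a) ^ Suc n" by (simp add: power_divide)
  also have "\<dots> = aa T (Suc n) []"
  proof -
    have "?B = {v. length v = Suc n \<and> [] @ v \<in> T}" by auto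
    then show ?thesis unfolding aa_def cnt_def by simp
  qed
  finally show ?case using Suc by simp
qed

lemma free_sub: "(free_semigroup :: 'a list set) \<subseteq> free_semigroup" by simp

lemma aa_free: "aa (free_semigroup :: 'a::finite list set) (Suc m) [] = 1"
proof -
  have "{v::'a list. length v = Suc m \<and> [] @ v \<in> free_semigroup} = {v. length v = Suc m}"
    by (auto simp: free_semigroup_def)
  then show ?thesis unfolding aa_def cnt_def using words_card[where 'a='a, of "Suc m"] by simp
qed

lemma mu_free: "mu_upto (free_semigroup :: 'a::finite list set) n = real n"
  using mu_formula[OF free_sub, of n] by (simp add: aa_free)

lemma ratio_CC:
  fixes S :: "'a::finite list set"
  assumes "S \<subseteq> free_semigroup"
  shows "mu_upto S n / mu_upto (free_semigroup :: 'a list set) n = CC S n []"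
  unfolding mu_free mu_formula[OF assms] CC_def ..

lemma chain_disj:
  fixes S :: "'a list set"
  assumes spf: "strongly_product_free k S" and len: "length cs = k - 1" and set: "set cs \<subseteq> S"
    and ij: "i < j" "j \<le> k - 1"
    and vi: "concat (drop i cs) @ z @ v \<in> S" and vj: "concat (drop j cs) @ z @ v \<in> S"
  shows False
proof -
  define xs where "xs = take (j - i) (drop i cs) @ [concat (drop j cs) @ z @ v]"
  have dj: "drop (j - i) (drop i cs) = drop j cs" using ij by simp
  have "drop i cs = take (j - i) (drop i cs) @ drop (j - i) (drop i cs)" by (rule append_take_drop_id[symmetric])
  then have ci: "concat (drop i cs) = concat (take (j - i) (drop i cs)) @ concat (drop j cs)"
    by (metis concat_append dj)
  have cxs: "concat xs = concat (drop i cs) @ z @ v" unfolding xs_def ci by simp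
  have lxs: "length xs = j - i + 1" unfolding xs_def using ij len by simp
  have sxs: "set xs \<subseteq> S" unfolding xs_def using set vj
    by (auto dest: in_set_takeD in_set_dropD)
  have "2 \<le> j - i + 1" "j - i + 1 \<le> k" using ij by auto
  then have "product_free (j - i + 1) S" using spf unfolding strongly_product_free_def by blast
  then show False unfolding product_free_def using lxs sxs cxs vi by blast
qed

lemma chain_cnt:
  fixes S :: "'a::finite list set"
  assumes spf: "strongly_product_free k S" and len: "length cs = k - 1" and set: "set cs \<subseteq> S"
  shows "(\<Sum>j\<le>k-1. cnt S m (concat (drop j cs) @ z)) \<le> CARD('a) ^ m"
proof -
  define V where "V j = {v::'a list. length v = m \<and> (concat (drop j cs) @ z) @ v \<in> S}" for j
  have fin: "finite (V j)" for j unfolding V_def by (rule finite_subset[OF _ words_finite[of m]]) auto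
  have disj: "V i \<inter> V j = {}" if "i \<le> k - 1" "j \<le> k - 1" "i \<noteq> j" for i j
  proof (rule ccontr)
    assume "V i \<inter> V j \<noteq> {}"
    then obtain v where v: "v \<in> V i" "v \<in> V j" by blast
    show False
    proof (cases "i < j")
      case True
      then show False using chain_disj[OF spf len set True that(2)] v unfolding V_def by auto
    next
      case False
      then have "j < i" using that by simp
      then show False using chain_disj[OF spf len set _ that(1)] v unfolding V_def by auto
    qed
  qed
  have "(\<Sum>j\<le>k-1. cnt S m (concat (drop j cs) @ z)) = (\<Sum>j\<le>k-1. card (V j))"
    unfolding cnt_def V_def ..
  also have "\<dots> = card (\<Union>j\<le>k-1. V j)"
    by (rule card_UN_disjoint[symmetric]) (use fin disj in auto)
  also have "\<dots> \<le> card {v::'a list. length v = m}"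
    by (rule card_mono[OF words_finite]) (auto simp: V_def)
  finally show ?thesis by (simp add: words_card)
qed

lemma chain_CC:
  fixes S :: "'a::finite list set"
  assumes spf: "strongly_product_free k S" and len: "length cs = k - 1" and set: "set cs \<subseteq> S"
  shows "(\<Sum>j\<le>k-1. CC S n (concat (drop j cs) @ z)) \<le> 1"
proof (cases "n = 0")
  case True then show ?thesis by (simp add: CC_def)
next
  case False
  have aa1: "(\<Sum>j\<le>k-1. aa S m (concat (drop j cs) @ z)) \<le> 1" for m
  proof -
    have "(\<Sum>j\<le>k-1. aa S m (concat (drop j cs) @ z)) = real (\<Sum>j\<le>k-1. cnt S m (concat (drop j cs) @ z)) / real CARD('a) ^ m"
      unfolding aa_def by (simp add: sum_divide_distrib)
    also have "\<dots> \<le> 1"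
    proof -
      have "real (\<Sum>j\<le>k-1. cnt S m (concat (drop j cs) @ z)) \<le> real CARD('a) ^ m"
        using chain_cnt[OF spf len set, of m z] by (metis of_nat_le_iff of_nat_power)
      then show ?thesis by (simp add: divide_le_eq_1)
    qed
    finally show ?thesis .
  qed
  have "(\<Sum>j\<le>k-1. CC S n (concat (drop j cs) @ z)) = (\<Sum>m<n. \<Sum>j\<le>k-1. aa S (Suc m) (concat (drop j cs) @ z)) / real n"
    unfolding CC_def by (simp add: sum_divide_distrib[symmetric] sum.swap[of _ "{..<n}"])
  also have "\<dots> \<le> real n / real n"
  proof (rule divide_right_mono)
    show "(\<Sum>m<n. \<Sum>j\<le>k-1. aa S (Suc m) (concat (drop j cs) @ z)) \<le> real n"
      using sum_mono[of "{..<n}" "\<lambda>m. \<Sum>j\<le>k-1. aa S (Suc m) (concat (drop j cs) @ z)" "\<lambda>m. 1"] aa1 by simp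
  qed simp
  finally show ?thesis using False by simp
qed


lemma diag:
  fixes S :: "'a::finite list set" and r0 :: "nat \<Rightarrow> nat"
  assumes r0: "strict_mono r0"
  shows "\<exists>d. strict_mono d \<and> (\<forall>x. convergent (\<lambda>i. CC S (r0 (d i)) x))"
proof -
  define P where "P n s \<longleftrightarrow> convergent (\<lambda>i. CC S (r0 (s i)) (from_nat n :: 'a list))"
    for n and s :: "nat \<Rightarrow> nat"
  interpret subseqs P
  proof
    fix n and s :: "nat \<Rightarrow> nat" assume s: "strict_mono s"
    obtain f where f: "strict_mono f" "monoseq (\<lambda>i. CC S (r0 (s (f i))) (from_nat n :: 'a list))"
      using seq_monosub[of "\<lambda>i. CC S (r0 (s i)) (from_nat n :: 'a list)"] by auto
    have "Bseq (\<lambda>i. CC S (r0 (s (f i))) (from_nat n :: 'a list))"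
    proof (rule BseqI'[where K=1])
      fix i
      show "norm (CC S (r0 (s (f i))) (from_nat n :: 'a list)) \<le> 1"
        using CC_nonneg[of S "r0 (s (f i))" "from_nat n :: 'a list"] CC_le1[of S "r0 (s (f i))" "from_nat n :: 'a list"]
        by simp
    qed
    then have "convergent (\<lambda>i. CC S (r0 (s (f i))) (from_nat n :: 'a list))"
      using Bseq_monoseq_convergent f(2) by blast
    then show "\<exists>r'. strict_mono r' \<and> P n (s \<circ> r')" using f(1) by (auto simp: P_def o_def)
  qed
  have stable: "P n (s \<circ> r)" if "strict_mono r" "P n s" for r s n
  proof -
    have "convergent ((\<lambda>i. CC S (r0 (s i)) (from_nat n :: 'a list)) \<circ> r)"
      by (rule convergent_subseq_convergent) (use that in \<open>auto simp: P_def\<close>)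
    then show ?thesis by (simp add: P_def o_def)
  qed
  have conv: "convergent (\<lambda>i. CC S (r0 (diagseq i)) x)" for x :: "'a list"
  proof -
    have "P (to_nat x) (diagseq \<circ> (+) (Suc (to_nat x)))"
      by (rule diagseq_holds) (rule stable)
    then have "convergent (\<lambda>i. CC S (r0 (diagseq (i + Suc (to_nat x)))) x)"
      by (simp add: P_def o_def add.commute)
    then show ?thesis
      using convergent_ignore_initial_segment[of "\<lambda>i. CC S (r0 (diagseq i)) x" "Suc (to_nat x)"] by simp
  qed
  show ?thesis using subseq_diagseq conv by blast
qed

theorem theorem1p3:
  fixes S :: "'a::finite list set" and k :: nat
  assumes "k \<ge> 2"
    and "S \<subseteq> free_semigroup"
    and "strongly_product_free k S"
  shows "upper_density S \<le> ereal (1 / real k)"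
proof -
  let ?q = "real CARD('a)"
  let ?u = "\<lambda>n. ereal (CC S n [])"
  have ud: "upper_density S = limsup ?u"
    unfolding upper_density_def ratio_CC[OF assms(2)] ..
  obtain r0 where r0: "strict_mono r0" "(?u \<circ> r0) \<longlonglongrightarrow> limsup ?u"
    using limsup_subseq_lim by blast
  obtain d where d: "strict_mono d" "\<forall>x. convergent (\<lambda>i. CC S (r0 (d i)) x)"
    using diag[OF r0(1)] by blast
  define r where "r = r0 \<circ> d"
  have rmono: "strict_mono r" unfolding r_def using r0(1) d(1) by (rule strict_mono_o)
  define D where "D x = lim (\<lambda>i. CC S (r i) x)" for x
  have DL: "(\<lambda>i. CC S (r i) x) \<longlonglongrightarrow> D x" for x
    using d(2) unfolding D_def r_def convergent_LIMSEQ_iff by (simp add: o_def)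
  have "dlim S D k"
  proof
    fix x
    show "0 \<le> D x" by (rule LIMSEQ_le_const[OF DL]) (intro exI[of _ 0] allI impI CC_nonneg)
    show "D x \<le> 1" by (rule LIMSEQ_le_const2[OF DL]) (intro exI[of _ 0] allI impI CC_le1)
    have t1: "(\<lambda>i. CC S (r i) x - (\<Sum>b\<in>UNIV. CC S (r i) (x @ [b])) / ?q) \<longlonglongrightarrow> D x - (\<Sum>b\<in>UNIV. D (x @ [b])) / ?q"
      by (auto intro!: tendsto_intros DL)
    have inv: "(\<lambda>i. 1 / real (r i)) \<longlonglongrightarrow> 0"
      using LIMSEQ_subseq_LIMSEQ[OF lim_inverse_n' rmono] by (simp add: o_def)
    have t2: "(\<lambda>i. CC S (r i) x - (\<Sum>b\<in>UNIV. CC S (r i) (x @ [b])) / ?q) \<longlonglongrightarrow> 0"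
    proof -
      have bnd: "norm (CC S (r i) x - (\<Sum>b\<in>UNIV. CC S (r i) (x @ [b])) / ?q) \<le> 1 / real (r i)" for i
        using CC_harm[of S "r i" x] by (simp only: real_norm_def)
      show ?thesis by (rule Lim_null_comparison[OF always_eventually[OF allI[OF bnd]] inv])
    qed
    have "D x - (\<Sum>b\<in>UNIV. D (x @ [b])) / ?q = 0" by (rule LIMSEQ_unique[OF t1 t2])
    then show "D x = (\<Sum>b\<in>UNIV. D (x @ [b])) / ?q" by simp
  next
    fix x :: "'a list" and \<eta> :: real assume epos: "\<eta> > 0"
    have ev1: "eventually (\<lambda>i. D x - \<eta> < CC S (r i) x) sequentially"
      by (rule order_tendstoD(1)[OF DL]) (use epos in simp)
    have ev2: "eventually (\<lambda>i. 1 \<le> i) sequentially" by (rule eventually_ge_at_top)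
    obtain i0 where i0: "\<forall>n\<ge>i0. D x - \<eta> < CC S (r n) x \<and> 1 \<le> n"
      using eventually_conj[OF ev1 ev2] unfolding eventually_sequentially by blast
    define i where "i = i0"
    have i: "D x - \<eta> < CC S (r i) x" "1 \<le> i" using i0 unfolding i_def by auto
    define N where "N = r i"
    have N1: "N \<ge> 1" unfolding N_def using seq_suble[OF rmono, of i] i(2) by simp
    have "\<exists>m<N. aa S (Suc m) x > D x - \<eta>"
    proof (rule ccontr)
      assume "\<not> ?thesis"
      then have "\<forall>m<N. aa S (Suc m) x \<le> D x - \<eta>" by auto
      then have "(\<Sum>m<N. aa S (Suc m) x) \<le> (\<Sum>m<N. D x - \<eta>)" by (intro sum_mono) auto
      then have "(\<Sum>m<N. aa S (Suc m) x) \<le> real N * (D x - \<eta>)" by simp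
      then have "CC S N x \<le> D x - \<eta>" unfolding CC_def using N1
        by (simp add: divide_le_eq mult.commute)
      then show False using i(1) unfolding N_def by simp
    qed
    then obtain m where "aa S (Suc m) x > D x - \<eta>" by blast
    then have "real (cnt S (Suc m) x) / ?q ^ (Suc m) > D x - \<eta>" by (simp only: aa_def)
    then show "\<exists>m. real (cnt S m x) / ?q ^ m > D x - \<eta>" by blast
  next
    fix cs :: "'a list list" and z :: "'a list"
    assume len: "length cs = k - 1" and set: "set cs \<subseteq> S"
    have "(\<lambda>i. \<Sum>j\<le>k-1. CC S (r i) (concat (drop j cs) @ z)) \<longlonglongrightarrow> (\<Sum>j\<le>k-1. D (concat (drop j cs) @ z))"
      by (intro tendsto_sum DL)
    then show "(\<Sum>j\<le>k-1. D (concat (drop j cs) @ z)) \<le> 1"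
      by (rule LIMSEQ_le_const2) (intro exI[of _ 0] allI impI chain_CC[OF assms(3) len set])
  next
    show "k \<ge> 2" by (rule assms(1))
  qed
  then have Dn: "D [] \<le> 1 / real k" by (rule dlim.D_nil_le)
  have l1: "(?u \<circ> r) \<longlonglongrightarrow> limsup ?u"
    unfolding r_def using LIMSEQ_subseq_LIMSEQ[OF r0(2) d(1)] by (simp add: o_assoc)
  have l2: "(?u \<circ> r) \<longlonglongrightarrow> ereal (D [])"
    using DL[of "[]"] by (simp add: o_def)
  have "limsup ?u = ereal (D [])" by (rule LIMSEQ_unique[OF l1 l2])
  then show ?thesis using ud Dn by simp
qed

end
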